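(* Let $u$ and $v$ be vertices of $G$ such that $u$ is neither an ancestor nor a descendant of $v$. Suppose the set $X$ of Case 3 of the routing algorithm (the vertices of $C_{T^u}$ that are ancestors of $v$ and not ancestors of $u$) is empty. Then the vertices visited when executing the routing steps of Case 3 a) lie on the path in $T$ from $u$ to $v$, and they are visited in the order in which they appear on this path.
   Context: Let $T$ be a rooted tree on $n$ vertices with positive edge weights; $P(a,b)$ is the path in $T$ from $a$ to $b$ and $\delta_T(a,b)$ its weight. Ancestor/descendant refer to $T$, and a vertex counts as its own ancestor and descendant; "deepest"/"highest" refer to depth in $T$. $T_v$ is the subtree of $T$ rooted at $v$. For every non-leaf vertex $v$ fix a child $c_1(v)$ with $|T_{c_1(v)}|$ maximal; edges $(v,c_1(v))$ are leftmost. A subtree $R$ of $T$ is rooted at its vertex closest to the root, $rt(R)$, and inherits the leftmost labelling; $R_v$ is the subtree of $R$ rooted at $v$. $P_R(v)$ is the longest downward path from $v$ in $R$ using only leftmost edges, with last vertex $l(v)$; $l(R):=l(rt(R))$. A vertex $v$ of $R$ is $d$-balanced if $|R_{c_1(v)}|\le |R|-d$ (with $|R_{c_1(v)}|=0$ if $c_1(v)$ is undefined or not in $R$); $b_d(v)$ is the first $d$-balanced vertex on $P_R(v)$, or NULL. $CV(R,d)=\emptyset$ if $b_d(rt(R))$ is NULL, else $\{b\}\cup\bigcup_w CV(R_w,d)$ with $b=b_d(rt(R))$ and $w$ ranging over children of $b$ in $R$. Fix an integer $k\ge4$; for a subtree $R$ with $m$ vertices, $C_R=V(R)$ if $k\ge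 m/2-1$, else $C_R=CV(R,m/k)\cup\{l(R),rt(R)\}$. Canonical subtrees: $T$ is canonical; if $R$ is canonical, each component of $R$ minus $C_R$ is canonical. Each vertex $v$ lies in $C_R$ for exactly one canonical $R$, denoted $T^v$. The spanner $G$ has vertex set $V(T)$ and edges: all edges of $T$, and all pairs of distinct vertices of $C_R$ for every canonical $R$; edge $(a,b)$ has weight $\delta_T(a,b)$. Routing algorithm from current vertex $u$ to destination $v$: Case 0: if $v$ is adjacent to $u$, move to $v$. Case 1: $u$ is an ancestor of $v$; let $X$ be the vertices of $C_{T^u}$ that are ancestors of $v$, $x$ the deepest; move to $x$, then to the child of $x$ that is an ancestor of $v$. Case 2: $u$ is a descendant of $v$; let $X$ be the vertices of $C_{T^u}$ that are descendants of $v$ and ancestors of $u$, $x$ the highest; move to $x$, then to the parent of $x$. Case 3: $u$ is neither; let $X$ be the vertices of $C_{T^u}$ that are ancestors of $v$ but not of $u$, and $Y$ those that are ancestors of $u$ but not of $v$, $y$ the highest vertex of $Y$. Case 3 a): $X=\emptyset$: move to $y$, then to the parent of $y$. Case 3 b): $X\neq\emptyset$: with $x$ the deepest vertex of $X$ and $x'$ the child of $x$ that is an ancestor of $v$, move to $x$, then to $x'$. (Moving to the current vertex means staying.) *)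

theory Defs
  imports Complex_Main "HOL-Library.Sublist"
begin

definition rooted_tree :: "'a set \<Rightarrow> 'a \<Rightarrow> ('a \<Rightarrow> 'a) \<Rightarrow> bool" where
  "rooted_tree V r par \<longleftrightarrow> finite V \<and> r \<in> V \<and> par r = r \<and>
     (\<forall>v\<in>V - {r}. par v \<in> V) \<and> (\<forall>v\<in>V. \<exists>n. (par ^^ n) v = r)"

definition anc :: "'a set \<Rightarrow> ('a \<Rightarrow> 'a) \<Rightarrow> 'a \<Rightarrow> 'a \<Rightarrow> bool" where
  "anc V par a b \<longleftrightarrow> b \<in> V \<and> (\<exists>n. (par ^^ n) b = a)"

definition depth :: "'a \<Rightarrow> ('a \<Rightarrow> 'a) \<Rightarrow> 'a \<Rightarrow> nat" where
  "depth r par v = (LEAST n. (par ^^ n) v = r)"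

definition children :: "'a set \<Rightarrow> 'a \<Rightarrow> ('a \<Rightarrow> 'a) \<Rightarrow> 'a \<Rightarrow> 'a set" where
  "children V r par v = {c \<in> V - {r}. par c = v}"

definition tsub :: "'a set \<Rightarrow> ('a \<Rightarrow> 'a) \<Rightarrow> 'a \<Rightarrow> 'a set" where
  "tsub V par v = {x \<in> V. anc V par v x}"

text \<open>c1 is a valid choice of leftmost (heavy) children.\<close>
definition heavy_choice :: "'a set \<Rightarrow> 'a \<Rightarrow> ('a \<Rightarrow> 'a) \<Rightarrow> ('a \<Rightarrow> 'a) \<Rightarrow> bool" where
  "heavy_choice V r par c1 \<longleftrightarrow> (\<forall>v\<in>V. children V r par v \<noteq> {} \<longrightarrow>
     c1 v \<in> children V r par v \<and>
     (\<forall>c\<in>children V r par v. card (tsub V par c) \<le> card (tsub V par (c1 v))))"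

text \<open>A subtree of T, given by its vertex set S (nonempty, connected in T).\<close>
definition is_subtree :: "'a set \<Rightarrow> ('a \<Rightarrow> 'a) \<Rightarrow> 'a set \<Rightarrow> bool" where
  "is_subtree V par S \<longleftrightarrow> S \<subseteq> V \<and> S \<noteq> {} \<and>
     (\<exists>\<rho>\<in>S. \<forall>x\<in>S. anc V par \<rho> x \<and> (\<forall>z. anc V par \<rho> z \<and> anc V par z x \<longrightarrow> z \<in> S))"

definition rt :: "'a set \<Rightarrow> ('a \<Rightarrow> 'a) \<Rightarrow> 'a set \<Rightarrow> 'a" where
  "rt V par S = (THE \<rho>. \<rho> \<in> S \<and> (\<forall>x\<in>S. anc V par \<rho> x))"

definition rsub :: "'a set \<Rightarrow> ('a \<Rightarrow> 'a) \<Rightarrow> 'a set \<Rightarrow> 'a \<Rightarrow> 'a set" where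
  "rsub V par S v = {x \<in> S. anc V par v x}"

text \<open>|R_{c1(v)}|, which is 0 if c1(v) is undefined (v a leaf of T) or not in R.\<close>
definition heavy_size :: "'a set \<Rightarrow> 'a \<Rightarrow> ('a \<Rightarrow> 'a) \<Rightarrow> ('a \<Rightarrow> 'a) \<Rightarrow> 'a set \<Rightarrow> 'a \<Rightarrow> nat" where
  "heavy_size V r par c1 S v =
     (if children V r par v = {} \<or> c1 v \<notin> S then 0 else card (rsub V par S (c1 v)))"

text \<open>(c1^^i) v is the i-th vertex of P_R(v) (vertex 0 is v).\<close>
definition onP :: "'a set \<Rightarrow> 'a \<Rightarrow> ('a \<Rightarrow> 'a) \<Rightarrow> ('a \<Rightarrow> 'a) \<Rightarrow> 'a set \<Rightarrow> 'a \<Rightarrow> nat \<Rightarrow> bool" where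
  "onP V r par c1 S v i \<longleftrightarrow>
     (\<forall>j\<le>i. (c1 ^^ j) v \<in> S \<and> (j < i \<longrightarrow> children V r par ((c1 ^^ j) v) \<noteq> {}))"

definition lv :: "'a set \<Rightarrow> 'a \<Rightarrow> ('a \<Rightarrow> 'a) \<Rightarrow> ('a \<Rightarrow> 'a) \<Rightarrow> 'a set \<Rightarrow> 'a \<Rightarrow> 'a" where
  "lv V r par c1 S v = (c1 ^^ (GREATEST i. onP V r par c1 S v i)) v"

definition balanced :: "'a set \<Rightarrow> 'a \<Rightarrow> ('a \<Rightarrow> 'a) \<Rightarrow> ('a \<Rightarrow> 'a) \<Rightarrow> 'a set \<Rightarrow> real \<Rightarrow> 'a \<Rightarrow> bool" where
  "balanced V r par c1 S d w \<longleftrightarrow> real (heavy_size V r par c1 S w) \<le> real (card S) - d"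

text \<open>b_d(v): first d-balanced vertex on P_R(v), None = NULL.\<close>
definition bd :: "'a set \<Rightarrow> 'a \<Rightarrow> ('a \<Rightarrow> 'a) \<Rightarrow> ('a \<Rightarrow> 'a) \<Rightarrow> 'a set \<Rightarrow> real \<Rightarrow> 'a \<Rightarrow> 'a option" where
  "bd V r par c1 S d v =
     (if \<exists>i. onP V r par c1 S v i \<and> balanced V r par c1 S d ((c1 ^^ i) v)
      then Some ((c1 ^^ (LEAST i. onP V r par c1 S v i \<and> balanced V r par c1 S d ((c1 ^^ i) v))) v)
      else None)"

inductive cv_mem :: "'a set \<Rightarrow> 'a \<Rightarrow> ('a \<Rightarrow> 'a) \<Rightarrow> ('a \<Rightarrow> 'a) \<Rightarrow> 'a set \<Rightarrow> real \<Rightarrow> 'a \<Rightarrow> bool"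
  for V r par c1 where
  cv_base: "bd V r par c1 S d (rt V par S) = Some b \<Longrightarrow> cv_mem V r par c1 S d b"
| cv_rec: "bd V r par c1 S d (rt V par S) = Some b \<Longrightarrow> w \<in> S \<Longrightarrow> w \<in> children V r par b \<Longrightarrow>
    cv_mem V r par c1 (rsub V par S w) d x \<Longrightarrow> cv_mem V r par c1 S d x"

definition CR :: "'a set \<Rightarrow> 'a \<Rightarrow> ('a \<Rightarrow> 'a) \<Rightarrow> ('a \<Rightarrow> 'a) \<Rightarrow> nat \<Rightarrow> 'a set \<Rightarrow> 'a set" where
  "CR V r par c1 k S =
     (if real k \<ge> real (card S) / 2 - 1 then S
      else {x. cv_mem V r par c1 S (real (card S) / real k) x}
           \<union> {lv V r par c1 S (rt V par S), rt V par S})"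

definition is_component :: "'a set \<Rightarrow> ('a \<Rightarrow> 'a) \<Rightarrow> 'a set \<Rightarrow> 'a set \<Rightarrow> bool" where
  "is_component V par A Q \<longleftrightarrow> Q \<subseteq> A \<and> is_subtree V par Q \<and>
     (\<forall>Q'. Q \<subseteq> Q' \<and> Q' \<subseteq> A \<and> is_subtree V par Q' \<longrightarrow> Q' = Q)"

inductive canonical :: "'a set \<Rightarrow> 'a \<Rightarrow> ('a \<Rightarrow> 'a) \<Rightarrow> ('a \<Rightarrow> 'a) \<Rightarrow> nat \<Rightarrow> 'a set \<Rightarrow> bool"
  for V r par c1 k where
  can_T: "canonical V r par c1 k V"
| can_comp: "canonical V r par c1 k S \<Longrightarrow> is_component V par (S - CR V r par c1 k S) Q \<Longrightarrow>
    canonical V r par c1 k Q"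

definition Tup :: "'a set \<Rightarrow> 'a \<Rightarrow> ('a \<Rightarrow> 'a) \<Rightarrow> ('a \<Rightarrow> 'a) \<Rightarrow> nat \<Rightarrow> 'a \<Rightarrow> 'a set" where
  "Tup V r par c1 k v = (THE S. canonical V r par c1 k S \<and> v \<in> CR V r par c1 k S)"

definition anc_list :: "'a \<Rightarrow> ('a \<Rightarrow> 'a) \<Rightarrow> 'a \<Rightarrow> 'a list" where
  "anc_list r par a = map (\<lambda>i. (par ^^ i) a) [0..<Suc (depth r par a)]"

text \<open>The path P(a,b) in T as the list of its vertices from a to b.\<close>
definition tpath :: "'a set \<Rightarrow> 'a \<Rightarrow> ('a \<Rightarrow> 'a) \<Rightarrow> 'a \<Rightarrow> 'a \<Rightarrow> 'a list" where
  "tpath V r par a b =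
     takeWhile (\<lambda>x. \<not> anc V par x b) (anc_list r par a)
     @ [hd (dropWhile (\<lambda>x. \<not> anc V par x b) (anc_list r par a))]
     @ rev (takeWhile (\<lambda>x. \<not> anc V par x a) (anc_list r par b))"

definition case3_X :: "'a set \<Rightarrow> 'a \<Rightarrow> ('a \<Rightarrow> 'a) \<Rightarrow> ('a \<Rightarrow> 'a) \<Rightarrow> nat \<Rightarrow> 'a \<Rightarrow> 'a \<Rightarrow> 'a set" where
  "case3_X V r par c1 k u v =
     {x \<in> CR V r par c1 k (Tup V r par c1 k u). anc V par x v \<and> \<not> anc V par x u}"

definition case3_Y :: "'a set \<Rightarrow> 'a \<Rightarrow> ('a \<Rightarrow> 'a) \<Rightarrow> ('a \<Rightarrow> 'a) \<Rightarrow> nat \<Rightarrow> 'a \<Rightarrow> 'a \<Rightarrow> 'a set" where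
  "case3_Y V r par c1 k u v =
     {y \<in> CR V r par c1 k (Tup V r par c1 k u). anc V par y u \<and> \<not> anc V par y v}"

definition case3_y :: "'a set \<Rightarrow> 'a \<Rightarrow> ('a \<Rightarrow> 'a) \<Rightarrow> ('a \<Rightarrow> 'a) \<Rightarrow> nat \<Rightarrow> 'a \<Rightarrow> 'a \<Rightarrow> 'a" where
  "case3_y V r par c1 k u v =
     (THE y. y \<in> case3_Y V r par c1 k u v \<and>
        (\<forall>y'\<in>case3_Y V r par c1 k u v. depth r par y \<le> depth r par y'))"

end

theory Submission imports Defs begin

locale RT =
  fixes V :: "'a set" and r :: 'a and par :: "'a \<Rightarrow> 'a" and c1 :: "'a \<Rightarrow> 'a" and k :: nat
  assumes rt: "rooted_tree V r par" and hc: "heavy_choice V r par c1"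
begin

lemma fin: "finite V" and r_in: "r \<in> V" and par_r: "par r = r"
  using rt unfolding rooted_tree_def by auto

lemma par_in: "x \<in> V \<Longrightarrow> par x \<in> V"
  using rt unfolding rooted_tree_def by (cases "x = r") auto

lemma pow_in: "x \<in> V \<Longrightarrow> (par ^^ n) x \<in> V"
  by (induction n) (auto simp: par_in)

lemma pow_r: "(par ^^ n) r = r"
  by (induction n) (auto simp: par_r)

lemma reach: "x \<in> V \<Longrightarrow> \<exists>n. (par ^^ n) x = r"
  using rt unfolding rooted_tree_def by auto

lemma pow_add: "(par ^^ (m + n)) x = (par ^^ m) ((par ^^ n) x)"
  by (simp add: funpow_add)

lemma after: "(par ^^ n) x = r \<Longrightarrow> n \<le> m \<Longrightarrow> (par ^^ m) x = r"
proof -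
  assume a: "(par ^^ n) x = r" "n \<le> m"
  have "(par ^^ m) x = (par ^^ (m - n)) ((par ^^ n) x)"
    using a(2) pow_add[of "m-n" n x] by simp
  then show ?thesis using a(1) pow_r by simp
qed

lemma pow_mult: "(par ^^ n) x = x \<Longrightarrow> (par ^^ (t * n)) x = x"
proof (induction t)
  case (Suc t)
  then show ?case using pow_add[of n "t*n" x] by (simp add: add.commute)
qed simp

lemma cycle: "x \<in> V \<Longrightarrow> (par ^^ n) x = x \<Longrightarrow> n > 0 \<Longrightarrow> x = r"
proof -
  assume a: "x \<in> V" "(par ^^ n) x = x" "n > 0"
  obtain N where N: "(par ^^ N) x = r" using reach a(1) by blast
  have "N \<le> N * n" using a(3) by simp
  then have "(par ^^ (N * n)) x = r" using after N by blast
  then show ?thesis using pow_mult[OF a(2), of N] by simp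
qed

lemma anc_in: "anc V par a b \<Longrightarrow> a \<in> V \<and> b \<in> V"
  unfolding anc_def using pow_in by blast

lemma anc_refl: "x \<in> V \<Longrightarrow> anc V par x x"
  unfolding anc_def by (metis funpow_0)

lemma anc_trans: "anc V par a b \<Longrightarrow> anc V par b c \<Longrightarrow> anc V par a c"
  unfolding anc_def by (metis pow_add)

lemma anc_r: "x \<in> V \<Longrightarrow> anc V par r x"
  unfolding anc_def using reach by blast

lemma anc_antisym: "anc V par a b \<Longrightarrow> anc V par b a \<Longrightarrow> a = b"
proof -
  assume a: "anc V par a b" "anc V par b a"
  obtain m where m: "(par ^^ m) b = a" using a(1) unfolding anc_def by blast
  obtain n where n: "(par ^^ n) a = b" using a(2) unfolding anc_def by blast
  have bV: "b \<in> V" using a(1) unfolding anc_def by blast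
  have "(par ^^ (n + m)) b = b" using m n pow_add by metis
  show ?thesis
  proof (cases "n + m = 0")
    case True then show ?thesis using m by simp
  next
    case False
    then have "b = r" using cycle bV \<open>(par ^^ (n + m)) b = b\<close> by blast
    then show ?thesis using m pow_r by simp
  qed
qed

lemma anc_lin: "anc V par a x \<Longrightarrow> anc V par b x \<Longrightarrow> anc V par a b \<or> anc V par b a"
proof -
  assume a: "anc V par a x" "anc V par b x"
  obtain m where m: "(par ^^ m) x = a" and xV: "x \<in> V" using a(1) unfolding anc_def by blast
  obtain n where n: "(par ^^ n) x = b" using a(2) unfolding anc_def by blast
  show ?thesis
  proof (cases "m \<le> n")
    case True
    then have "(par ^^ (n - m)) a = b" using m n pow_add[of "n-m" m x] by simp
    then show ?thesis unfolding anc_def using m xV pow_in by blast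
  next
    case False
    then have "(par ^^ (m - n)) b = a" using m n pow_add[of "m-n" n x] by simp
    then show ?thesis unfolding anc_def using n xV pow_in by blast
  qed
qed


lemma V_subtree: "is_subtree V par V"
  unfolding is_subtree_def using r_in anc_r anc_in by blast

lemma single_subtree: "u \<in> V \<Longrightarrow> is_subtree V par {u}"
  unfolding is_subtree_def using anc_refl anc_antisym by blast

lemma union_subtree:
  assumes "is_subtree V par S1" "is_subtree V par S2" "S1 \<inter> S2 \<noteq> {}"
  shows "is_subtree V par (S1 \<union> S2)"
proof -
  obtain x where x: "x \<in> S1" "x \<in> S2" using assms(3) by blast
  obtain p1 where p1: "p1 \<in> S1" "\<forall>x\<in>S1. anc V par p1 x \<and> (\<forall>z. anc V par p1 z \<and> anc V par z x \<longrightarrow> z \<in> S1)"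
    using assms(1) unfolding is_subtree_def by blast
  obtain p2 where p2: "p2 \<in> S2" "\<forall>x\<in>S2. anc V par p2 x \<and> (\<forall>z. anc V par p2 z \<and> anc V par z x \<longrightarrow> z \<in> S2)"
    using assms(2) unfolding is_subtree_def by blast
  have gen: "is_subtree V par (A \<union> B)"
    if A: "is_subtree V par A" and B: "is_subtree V par B" and xa: "x \<in> A" "x \<in> B"
      and pa: "pa \<in> A" "\<forall>x\<in>A. anc V par pa x \<and> (\<forall>z. anc V par pa z \<and> anc V par z x \<longrightarrow> z \<in> A)"
      and pb: "pb \<in> B" "\<forall>x\<in>B. anc V par pb x \<and> (\<forall>z. anc V par pb z \<and> anc V par z x \<longrightarrow> z \<in> B)"
      and ab: "anc V par pa pb" for A B pa pb
  proof -
    have "\<forall>y\<in>A \<union> B. anc V par pa y \<and> (\<forall>z. anc V par pa z \<and> anc V par z y \<longrightarrow> z \<in> A \<union> B)"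
    proof
      fix y assume y: "y \<in> A \<union> B"
      show "anc V par pa y \<and> (\<forall>z. anc V par pa z \<and> anc V par z y \<longrightarrow> z \<in> A \<union> B)"
      proof (cases "y \<in> A")
        case True then show ?thesis using pa by blast
      next
        case False
        then have yB: "y \<in> B" using y by blast
        have "anc V par pa y" using ab pb yB anc_trans by blast
        moreover have "z \<in> A \<union> B" if z: "anc V par pa z" "anc V par z y" for z
        proof -
          have "anc V par pb z \<or> anc V par z pb" using anc_lin z(2) pb yB by blast
          then show ?thesis
          proof
            assume "anc V par pb z" then show ?thesis using pb yB z by blast
          next
            assume "anc V par z pb"
            then have "anc V par z x" using pb xa anc_trans by blast
            then show ?thesis using pa xa z by blast
          qed
        qed
        ultimately show ?thesis by blast
      qed
    qed
    then show ?thesis using A B pa unfolding is_subtree_def by blast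
  qed
  have "anc V par p1 p2 \<or> anc V par p2 p1" using anc_lin p1 p2 x by blast
  then show ?thesis
  proof
    assume "anc V par p1 p2" then show ?thesis using gen[OF assms(1,2) x p1 p2] by blast
  next
    assume "anc V par p2 p1" then show ?thesis using gen[OF assms(2,1) x(2,1) p2 p1] by (simp add: Un_commute)
  qed
qed

lemma rt_prop:
  assumes "is_subtree V par S"
  shows "rt V par S \<in> S \<and> (\<forall>x\<in>S. anc V par (rt V par S) x)"
proof -
  obtain p where p: "p \<in> S" "\<forall>x\<in>S. anc V par p x" using assms unfolding is_subtree_def by blast
  show ?thesis unfolding rt_def
    by (rule theI[of _ p]) (use p anc_antisym in blast)+
qed

lemma comp_exists:
  assumes "A \<subseteq> V" "u \<in> A"
  shows "\<exists>Q. is_component V par A Q \<and> u \<in> Q"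
proof -
  let ?P = "\<lambda>Q. is_subtree V par Q \<and> Q \<subseteq> A \<and> u \<in> Q"
  have h1: "?P {u}" using single_subtree assms by blast
  have h2: "\<forall>Q. ?P Q \<longrightarrow> card Q < Suc (card V)"
  proof (intro allI impI)
    fix Q assume "?P Q"
    then have "Q \<subseteq> V" using assms(1) by blast
    then have "card Q \<le> card V" using card_mono fin by blast
    then show "card Q < Suc (card V)" by simp
  qed
  obtain Q where QQ: "?P Q \<and> (\<forall>Q'. ?P Q' \<longrightarrow> card Q' \<le> card Q)"
    using Lattices_Big.ex_has_greatest_nat[OF h1 h2] ..
  then have Q: "?P Q" "\<forall>Q'. ?P Q' \<longrightarrow> card Q' \<le> card Q" by simp_all
  have max: "Q' = Q" if "Q \<subseteq> Q'" "Q' \<subseteq> A" "is_subtree V par Q'" for Q'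
  proof -
    have f: "finite Q'" using finite_subset[OF subset_trans[OF that(2) assms(1)] fin] .
    have "u \<in> Q'" using that(1) Q(1) by blast
    then have "?P Q'" using that(2,3) by simp
    then have "card Q' \<le> card Q" using Q(2) by simp
    moreover have "card Q \<le> card Q'" using card_mono[OF f that(1)] .
    ultimately have "card Q = card Q'" by simp
    from card_subset_eq[OF f that(1) this] show ?thesis by (rule sym)
  qed
  have "is_component V par A Q" unfolding is_component_def
  proof (intro conjI allI impI)
    show "Q \<subseteq> A" using Q(1) by simp
    show "is_subtree V par Q" using Q(1) by simp
    fix Q' assume "Q \<subseteq> Q' \<and> Q' \<subseteq> A \<and> is_subtree V par Q'"
    then show "Q' = Q" using max by simp
  qed
  then show ?thesis using Q(1) by blast
qed

lemma onP_last: "onP V r par c1 S v i \<Longrightarrow> (c1 ^^ i) v \<in> S"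
  unfolding onP_def by simp

lemma cv_in: "cv_mem V r par c1 S d x \<Longrightarrow> x \<in> S"
proof (induction rule: cv_mem.induct)
  case (cv_base S d b)
  let ?v = "rt V par S"
  let ?Q = "\<lambda>i. onP V r par c1 S ?v i \<and> balanced V r par c1 S d ((c1 ^^ i) ?v)"
  have ex: "\<exists>i. ?Q i"
  proof (rule ccontr)
    assume "\<not> (\<exists>i. ?Q i)"
    then have "bd V r par c1 S d ?v = None" unfolding bd_def by (simp only: if_False)
    then show False using cv_base by simp
  qed
  have "bd V r par c1 S d ?v = Some ((c1 ^^ (LEAST i. ?Q i)) ?v)"
    unfolding bd_def by (simp only: if_P[OF ex])
  then have b: "b = (c1 ^^ (LEAST i. ?Q i)) ?v" using cv_base by simp
  have "?Q (LEAST i. ?Q i)" using ex by (rule LeastI_ex)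
  then show ?case unfolding b using onP_last by blast
next
  case (cv_rec S d b w x)
  then show ?case unfolding rsub_def by blast
qed

lemma c1_child:
  assumes "x \<in> V" "children V r par x \<noteq> {}"
  shows "c1 x \<in> V - {r} \<and> par (c1 x) = x"
proof -
  have "children V r par x \<noteq> {} \<longrightarrow> c1 x \<in> children V r par x \<and>
     (\<forall>c\<in>children V r par x. card (tsub V par c) \<le> card (tsub V par (c1 x)))"
    using hc assms(1) unfolding heavy_choice_def by (rule bspec)
  then have "c1 x \<in> children V r par x" using assms(2) by (rule mp[THEN conjunct1])
  then show ?thesis unfolding children_def by simp
qed

lemma onP_back:
  assumes "onP V r par c1 S v i" "S \<subseteq> V" "j + t \<le> i"
  shows "(par ^^ t) ((c1 ^^ (j + t)) v) = (c1 ^^ j) v"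
  using assms(3)
proof (induction t)
  case (Suc t)
  have lt: "j + t < i" using Suc by simp
  let ?w = "(c1 ^^ (j + t)) v"
  have "?w \<in> S" "children V r par ?w \<noteq> {}" using assms(1) lt unfolding onP_def by auto
  then have "par (c1 ?w) = ?w" using c1_child assms(2) by blast
  then have "(par ^^ Suc t) ((c1 ^^ (j + Suc t)) v) = (par ^^ t) ?w"
    by (simp add: funpow_swap1)
  then show ?case using Suc by simp
qed simp

lemma onP_notr:
  assumes "onP V r par c1 S v i" "S \<subseteq> V" "0 < j" "j \<le> i"
  shows "(c1 ^^ j) v \<noteq> r"
proof -
  obtain j' where j': "j = Suc j'" using assms(3) not0_implies_Suc by blast
  let ?w = "(c1 ^^ j') v"
  have "?w \<in> S" "children V r par ?w \<noteq> {}" using assms(1,4) j' unfolding onP_def by auto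
  then have "c1 ?w \<noteq> r" using c1_child assms(2) by blast
  then show ?thesis using j' by simp
qed

lemma onP_bound:
  assumes "onP V r par c1 S v i" "S \<subseteq> V"
  shows "i < card S"
proof -
  have inj: "inj_on (\<lambda>j. (c1 ^^ j) v) {..i}"
  proof (rule inj_onI)
    fix a b assume ab: "a \<in> {..i}" "b \<in> {..i}" "(c1 ^^ a) v = (c1 ^^ b) v"
    show "a = b"
    proof (rule ccontr)
      assume "a \<noteq> b"
      then consider "a < b" | "b < a" by linarith
      then show False
      proof cases
        case 1
        have e: "(par ^^ (b - a)) ((c1 ^^ b) v) = (c1 ^^ a) v"
          using onP_back[OF assms, of a "b - a"] ab 1 by simp
        have inS: "(c1 ^^ b) v \<in> S" using assms(1) ab unfolding onP_def by auto
        have "(c1 ^^ b) v = r" using cycle[of "(c1 ^^ b) v" "b - a"] e ab(3) inS assms(2) 1 by auto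
        then show False using onP_notr[OF assms, of b] 1 ab by auto
      next
        case 2
        have e: "(par ^^ (a - b)) ((c1 ^^ a) v) = (c1 ^^ b) v"
          using onP_back[OF assms, of b "a - b"] ab 2 by simp
        have inS: "(c1 ^^ a) v \<in> S" using assms(1) ab unfolding onP_def by auto
        have "(c1 ^^ a) v = r" using cycle[of "(c1 ^^ a) v" "a - b"] e ab(3) inS assms(2) 2 by auto
        then show False using onP_notr[OF assms, of a] 2 ab by auto
      qed
    qed
  qed
  have sub: "(\<lambda>j. (c1 ^^ j) v) ` {..i} \<subseteq> S" using assms(1) unfolding onP_def by auto
  have "finite S" using finite_subset[OF assms(2) fin] .
  then have "card ((\<lambda>j. (c1 ^^ j) v) ` {..i}) \<le> card S" using sub card_mono by blast
  then show ?thesis using card_image[OF inj] by simp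
qed

lemma lv_in:
  assumes "v \<in> S" "S \<subseteq> V"
  shows "lv V r par c1 S v \<in> S"
proof -
  have "onP V r par c1 S v 0" using assms unfolding onP_def by simp
  then have "onP V r par c1 S v (GREATEST i. onP V r par c1 S v i)"
    using GreatestI_ex_nat[of "onP V r par c1 S v" "card S"] onP_bound assms(2)
    by (meson less_imp_le)
  then show ?thesis unfolding lv_def onP_def by blast
qed

lemma CR_sub:
  assumes s: "is_subtree V par S"
  shows "CR V r par c1 k S \<subseteq> S"
proof -
  have rS: "rt V par S \<in> S" using rt_prop[OF s] by blast
  have SV: "S \<subseteq> V" using s unfolding is_subtree_def by blast
  have "lv V r par c1 S (rt V par S) \<in> S" using lv_in[OF rS SV] .
  then show ?thesis unfolding CR_def using rS cv_in by auto
qed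

lemma CR_ne: "is_subtree V par S \<Longrightarrow> CR V r par c1 k S \<inter> S \<noteq> {}"
  unfolding CR_def using rt_prop is_subtree_def by auto


lemma compD:
  assumes "is_component V par A Q"
  shows "Q \<subseteq> A" "is_subtree V par Q"
    "\<And>Q'. Q \<subseteq> Q' \<Longrightarrow> Q' \<subseteq> A \<Longrightarrow> is_subtree V par Q' \<Longrightarrow> Q' = Q"
  using assms unfolding is_component_def by blast+

lemma canon_sub: "canonical V r par c1 k S \<Longrightarrow> is_subtree V par S"
proof (induction rule: canonical.induct)
  case can_T then show ?case by (rule V_subtree)
next
  case (can_comp S Q) then show ?case using compD(2) by blast
qed

lemma noV: "canonical V r par c1 k S \<Longrightarrow> \<not> V \<subseteq> S - CR V r par c1 k S"
proof
  assume a: "canonical V r par c1 k S" "V \<subseteq> S - CR V r par c1 k S"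
  have s: "is_subtree V par S" using canon_sub a(1) by blast
  then have "S \<subseteq> V" unfolding is_subtree_def by blast
  then show False using a(2) CR_ne[OF s] by blast
qed

lemma comp_merge:
  assumes "is_component V par A Q" "is_subtree V par B" "B \<subseteq> A" "Q \<inter> B \<noteq> {}"
  shows "B \<subseteq> Q"
proof -
  have "is_subtree V par (Q \<union> B)" using union_subtree assms compD(2)[OF assms(1)] by blast
  moreover have "Q \<union> B \<subseteq> A" using assms compD(1)[OF assms(1)] by blast
  ultimately have "Q \<union> B = Q" using compD(3)[OF assms(1), of "Q \<union> B"] by blast
  then show ?thesis by blast
qed

abbreviation CRk where "CRk S \<equiv> CR V r par c1 k S"

definition lam where
  "lam A B \<longleftrightarrow> A = B \<or> A \<inter> B = {} \<or> A \<subseteq> B - CRk B \<or> B \<subseteq> A - CRk A"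

lemma canon_ne: "canonical V r par c1 k S \<Longrightarrow> S \<noteq> {} \<and> S \<subseteq> V"
  using canon_sub unfolding is_subtree_def by blast

lemma laminar:
  assumes "canonical V r par c1 k A"
  shows "canonical V r par c1 k B \<Longrightarrow> lam A B"
  using assms
proof (induction A arbitrary: B rule: canonical.induct)
  case can_T
  then show ?case
  proof (induction B rule: canonical.induct)
    case can_T
    then show ?case unfolding lam_def by blast
  next
    case (can_comp B0 B)
    have cB0: "canonical V r par c1 k B0" by fact
    have cmp: "is_component V par (B0 - CRk B0) B" by fact
    have B: "B \<subseteq> B0 - CRk B0" using compD(1)[OF cmp] .
    from can_comp.IH consider "V = B0" | "V \<inter> B0 = {}" | "V \<subseteq> B0 - CRk B0" | "B0 \<subseteq> V - CRk V"
      unfolding lam_def by blast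
    then show ?case
    proof cases
      case 1 then show ?thesis unfolding lam_def using B by blast
    next
      case 2 then show ?thesis using canon_ne[OF cB0] by blast
    next
      case 3 then show ?thesis using noV[OF cB0] by blast
    next
      case 4 then show ?thesis unfolding lam_def using B by blast
    qed
  qed
next
  case (can_comp A0 A)
  have cA0: "canonical V r par c1 k A0" by fact
  have cmpA: "is_component V par (A0 - CRk A0) A" by fact
  have A: "A \<subseteq> A0 - CRk A0" using compD(1)[OF cmpA] .
  have cA: "canonical V r par c1 k A" using canonical.can_comp[OF cA0 cmpA] .
  have outer: "\<And>B. canonical V r par c1 k B \<Longrightarrow> lam A0 B" by fact
  show ?case using can_comp.prems(1)
  proof (induction B rule: canonical.induct)
    case can_T
    from outer[OF canonical.can_T] consider "A0 = V" | "A0 \<inter> V = {}" | "A0 \<subseteq> V - CRk V" | "V \<subseteq> A0 - CRk A0"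
      unfolding lam_def by blast
    then show ?case
    proof cases
      case 1 then show ?thesis unfolding lam_def using A by blast
    next
      case 2 then show ?thesis using canon_ne[OF cA0] by blast
    next
      case 3 then show ?thesis unfolding lam_def using A by blast
    next
      case 4 then show ?thesis using noV[OF cA0] by blast
    qed
  next
    case (can_comp B0 B)
    have cB0: "canonical V r par c1 k B0" by fact
    have cmpB: "is_component V par (B0 - CRk B0) B" by fact
    have B: "B \<subseteq> B0 - CRk B0" using compD(1)[OF cmpB] .
    have cB: "canonical V r par c1 k B" using canonical.can_comp[OF cB0 cmpB] .
    have inner: "lam A B0" by fact
    have sA: "is_subtree V par A" "is_subtree V par B" using canon_sub cA cB by blast+
    have neB: "B \<noteq> {}" using canon_ne cB by blast
    from outer[OF cB] consider "A0 = B" | "A0 \<inter> B = {}" | "A0 \<subseteq> B - CRk B" | "B \<subseteq> A0 - CRk A0"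
      unfolding lam_def by blast
    then show ?case
    proof cases
      case 4
      from inner consider "A = B0" | "A \<inter> B0 = {}" | "A \<subseteq> B0 - CRk B0" | "B0 \<subseteq> A - CRk A"
        unfolding lam_def by blast
      then show ?thesis
      proof cases
        case 3
        show ?thesis
        proof (cases "A \<inter> B = {}")
          case True then show ?thesis unfolding lam_def by blast
        next
          case False
          have "B \<subseteq> A" using comp_merge[OF cmpA sA(2) 4] False by blast
          moreover have "A \<subseteq> B" using comp_merge[OF cmpB sA(1) 3] False by blast
          ultimately show ?thesis unfolding lam_def by blast
        qed
      next
        case 1 then show ?thesis unfolding lam_def using B by blast
      next
        case 2 then show ?thesis unfolding lam_def using B by blast
      next
        case 4 then show ?thesis unfolding lam_def using B by blast
      qed
    next
      case 1 then show ?thesis unfolding lam_def using A by blast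
    next
      case 2 then show ?thesis unfolding lam_def using A by blast
    next
      case 3 then show ?thesis unfolding lam_def using A by blast
    qed
  qed
qed


lemma canon_exists:
  "canonical V r par c1 k S \<Longrightarrow> u \<in> S \<Longrightarrow> \<exists>S'. canonical V r par c1 k S' \<and> u \<in> CRk S'"
proof (induction "card S" arbitrary: S rule: less_induct)
  case less
  show ?case
  proof (cases "u \<in> CRk S")
    case True then show ?thesis using less.prems(1) by blast
  next
    case False
    have s: "is_subtree V par S" using canon_sub less.prems(1) by blast
    have SV: "S \<subseteq> V" using s unfolding is_subtree_def by blast
    have "S - CRk S \<subseteq> V" using SV by blast
    moreover have "u \<in> S - CRk S" using False less.prems(2) by blast
    ultimately obtain Q where Q: "is_component V par (S - CRk S) Q" "u \<in> Q"
      using comp_exists by blast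
    have cQ: "canonical V r par c1 k Q" using canonical.can_comp[OF less.prems(1) Q(1)] .
    have "Q \<subseteq> S - CRk S" using compD(1)[OF Q(1)] .
    then have "Q \<subset> S" using CR_ne[OF s] by blast
    moreover have "finite S" using finite_subset[OF SV fin] .
    ultimately have "card Q < card S" by (rule psubset_card_mono[rotated])
    then show ?thesis using less.hyps[OF _ cQ Q(2)] by blast
  qed
qed

lemma canon_uniq:
  assumes "canonical V r par c1 k S1" "canonical V r par c1 k S2" "u \<in> CRk S1" "u \<in> CRk S2"
  shows "S1 = S2"
proof -
  have u1: "u \<in> S1" using CR_sub[OF canon_sub[OF assms(1)]] assms(3) by blast
  have u2: "u \<in> S2" using CR_sub[OF canon_sub[OF assms(2)]] assms(4) by blast
  from laminar[OF assms(1,2)] consider "S1 = S2" | "S1 \<inter> S2 = {}" | "S1 \<subseteq> S2 - CRk S2" | "S2 \<subseteq> S1 - CRk S1"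
    unfolding lam_def by blast
  then show ?thesis
  proof cases
    case 1 then show ?thesis .
  next
    case 2 then show ?thesis using u1 u2 by blast
  next
    case 3 then show ?thesis using u1 assms(4) by blast
  next
    case 4 then show ?thesis using u2 assms(3) by blast
  qed
qed

lemma Tup_prop:
  assumes "u \<in> V"
  shows "canonical V r par c1 k (Tup V r par c1 k u) \<and> u \<in> CRk (Tup V r par c1 k u)"
proof -
  obtain S where S: "canonical V r par c1 k S" "u \<in> CRk S"
    using canon_exists[OF canonical.can_T assms] by blast
  show ?thesis unfolding Tup_def
  proof (rule theI[of _ S])
    show "canonical V r par c1 k S \<and> u \<in> CRk S" using S by simp
    fix S' assume "canonical V r par c1 k S' \<and> u \<in> CRk S'"
    then show "S' = S" using canon_uniq[of S' S u] S by blast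
  qed
qed

lemma depth_r: "x \<in> V \<Longrightarrow> (par ^^ depth r par x) x = r"
  unfolding depth_def using reach by (rule LeastI_ex)

lemma depth_le: "(par ^^ n) x = r \<Longrightarrow> depth r par x \<le> n"
  unfolding depth_def by (rule Least_le)

lemma anc_depth:
  assumes "anc V par a b" "a \<noteq> b"
  shows "depth r par a < depth r par b"
proof -
  obtain m where m: "(par ^^ m) b = a" and bV: "b \<in> V" using assms(1) unfolding anc_def by blast
  have m0: "m > 0" using m assms(2) by (cases m) auto
  let ?db = "depth r par b"
  have db: "(par ^^ ?db) b = r" using depth_r[OF bV] .
  show ?thesis
  proof (cases "?db < m")
    case True
    have "(par ^^ m) b = r" using after[OF db] True by simp
    then have ar: "a = r" using m by simp
    have "depth r par a = 0" using depth_le[of 0 a] ar by simp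
    moreover have "?db \<noteq> 0"
    proof
      assume "?db = 0"
      then have "b = r" using db by simp
      then show False using m ar assms(2) by simp
    qed
    ultimately show ?thesis by simp
  next
    case False
    have "(par ^^ (?db - m)) a = r" using m db pow_add[of "?db - m" m b] False by simp
    then have "depth r par a \<le> ?db - m" by (rule depth_le)
    then show ?thesis using m0 False by simp
  qed
qed

lemma y_prop:
  assumes "u \<in> V" "\<not> anc V par u v"
  shows "case3_y V r par c1 k u v \<in> case3_Y V r par c1 k u v"
proof -
  let ?Y = "case3_Y V r par c1 k u v"
  have uY: "u \<in> ?Y" unfolding case3_Y_def using Tup_prop[OF assms(1)] anc_refl[OF assms(1)] assms(2) by blast
  obtain y where y: "y \<in> ?Y" "\<forall>y'. y' \<in> ?Y \<longrightarrow> depth r par y \<le> depth r par y'"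
    using ex_has_least_nat[of "\<lambda>y. y \<in> ?Y" u "depth r par", OF uY] by blast
  have uniq: "y2 = y" if "y2 \<in> ?Y" "\<forall>y'\<in>?Y. depth r par y2 \<le> depth r par y'" for y2
  proof (rule ccontr)
    assume ne: "y2 \<noteq> y"
    have a1: "anc V par y u" "anc V par y2 u" using y(1) that(1) unfolding case3_Y_def by blast+
    from anc_lin[OF a1] show False
    proof
      assume "anc V par y y2"
      then have "depth r par y < depth r par y2" using anc_depth ne by metis
      moreover have "depth r par y2 \<le> depth r par y" using that(2) y(1) by simp
      ultimately show False by simp
    next
      assume "anc V par y2 y"
      then have "depth r par y2 < depth r par y" using anc_depth ne by metis
      moreover have "depth r par y \<le> depth r par y2" using y(2) that(1) by simp
      ultimately show False by simp
    qed
  qed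
  let ?PP = "\<lambda>y. y \<in> ?Y \<and> (\<forall>y'\<in>?Y. depth r par y \<le> depth r par y')"
  have "?PP (THE y. ?PP y)"
  proof (rule theI[of _ y])
    show "?PP y" using y by blast
    fix y2 assume "?PP y2"
    then show "y2 = y" using uniq by simp
  qed
  then show ?thesis unfolding case3_y_def by simp
qed

lemma subseq_remdups_adj: "subseq (remdups_adj xs) xs"
  by (induction xs rule: remdups_adj.induct) auto


lemma tw_aux:
  "(\<And>x. x \<in> set pre \<Longrightarrow> P x) \<Longrightarrow>
   \<exists>W. takeWhile P (pre @ z # rest) @ [hd (dropWhile P (pre @ z # rest))] @ R = pre @ z # W"
  by (cases "P z") auto

lemma path_main:
  assumes uV: "u \<in> V" and vV: "v \<in> V" and yu: "anc V par y u" and yv: "\<not> anc V par y v"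
  shows "subseq (remdups_adj [u, y, par y]) (tpath V r par u v)"
proof -
  obtain m where m: "(par ^^ m) u = y" using yu unfolding anc_def by blast
  let ?du = "depth r par u"
  have mlt: "m < ?du"
  proof (rule ccontr)
    assume "\<not> m < ?du"
    then have "(par ^^ m) u = r" using after[OF depth_r[OF uV]] by simp
    then have "y = r" using m by simp
    then show False using yv anc_r[OF vV] by simp
  qed
  define f where "f = (\<lambda>i. (par ^^ i) u)"
  let ?Pt = "\<lambda>x. \<not> anc V par x v"
  have L: "anc_list r par u = map f [0..<Suc m] @ f (Suc m) # map f [Suc (Suc m)..<Suc ?du]"
  proof -
    have "[0..<Suc ?du] = [0..<Suc m] @ [Suc m..<Suc ?du]"
      using mlt upt_add_eq_append[of 0 "Suc m" "?du - m"] by simp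
    moreover have "[Suc m..<Suc ?du] = Suc m # [Suc (Suc m)..<Suc ?du]"
      using mlt upt_conv_Cons by simp
    ultimately show ?thesis unfolding anc_list_def f_def by simp
  qed
  have allP: "\<And>x. x \<in> set (map f [0..<Suc m]) \<Longrightarrow> ?Pt x"
  proof
    fix x assume "x \<in> set (map f [0..<Suc m])" and xv: "anc V par x v"
    then have "x \<in> f ` {0..<Suc m}" by (simp only: set_map set_upt)
    then obtain i where i0: "i \<in> {0..<Suc m}" "x = f i" by blast
    then have i: "i \<le> m" "x = f i" by auto
    have "(par ^^ (m - i)) x = y" using i m pow_add[of "m-i" i u] unfolding f_def by simp
    moreover have "x \<in> V" using i pow_in[OF uV] unfolding f_def by simp
    ultimately have "anc V par y x" unfolding anc_def by blast
    then show False using anc_trans xv yv by blast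
  qed
  let ?pre = "map f [0..<Suc m]" and ?z = "f (Suc m)" and ?rest = "map f [Suc (Suc m)..<Suc ?du]"
  have "\<exists>W. tpath V r par u v = ?pre @ ?z # W"
    unfolding tpath_def L by (rule tw_aux) (rule allP)
  then obtain W where W: "tpath V r par u v = ?pre @ ?z # W" by blast
  have z: "?z = par y" using m unfolding f_def by simp
  show ?thesis
  proof (cases "m = 0")
    case True
    then have yu': "y = u" using m by simp
    have "?pre = [u]" using True unfolding f_def by simp
    have f0: "f 0 = u" unfolding f_def by simp
    have "tpath V r par u v = u # par y # W" using W z True f0 by simp
    then have "subseq [u, par y] (tpath V r par u v)" by simp
    moreover have "remdups_adj [u, y, par y] = remdups_adj [u, par y]" using yu' by simp
    ultimately show ?thesis using subseq_remdups_adj[of "[u, par y]"] subseq_order.trans by metis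
  next
    case False
    have "[0..<Suc m] = [0..<m] @ [m]" by simp
    moreover have "[0..<m] = 0 # [1..<m]" using False upt_conv_Cons by simp
    ultimately have "?pre = u # map f [1..<m] @ [y]" using m unfolding f_def by simp
    then have "tpath V r par u v = u # (map f [1..<m] @ (y # par y # W))" using W z by simp
    moreover have "subseq [y, par y] (map f [1..<m] @ (y # par y # W))"
      by (rule list_emb_append2) simp
    ultimately have "subseq [u, y, par y] (tpath V r par u v)" by simp
    then show ?thesis using subseq_remdups_adj[of "[u, y, par y]"] subseq_order.trans by metis
  qed
qed

end

theorem lemma10:
  fixes V :: "'a set" and r :: 'a and par :: "'a \<Rightarrow> 'a" and c1 :: "'a \<Rightarrow> 'a"
    and k :: nat and u v :: 'a
  assumes "rooted_tree V r par"
    and "heavy_choice V r par c1"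
    and "k \<ge> 4"
    and "u \<in> V" and "v \<in> V"
    and "\<not> anc V par u v" and "\<not> anc V par v u"
    and "case3_X V r par c1 k u v = {}"
  shows "subseq (remdups_adj [u, case3_y V r par c1 k u v, par (case3_y V r par c1 k u v)])
                (tpath V r par u v)"
proof -
  interpret RT V r par c1 k using assms(1,2) by unfold_locales
  have "case3_y V r par c1 k u v \<in> case3_Y V r par c1 k u v" using y_prop assms(4,6) by blast
  then have "anc V par (case3_y V r par c1 k u v) u" "\<not> anc V par (case3_y V r par c1 k u v) v"
    unfolding case3_Y_def by blast+
  then show ?thesis using path_main assms(4,5) by blast
qed

end
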